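(* For $\xi_1,\xi_2\in\mathbb R$ let $W=\mathrm{diag}\{\xi_1,\dots,\xi_1,0,-\xi_2\}\in\mathbb R^{(d+2)\times(d+2)}$ ($\xi_1$ repeated $d$ times). Then the loss $L(W)$ equals, up to the constant factor $\tfrac12$, $$\mathcal L(\xi_1,\xi_2):=\mathbb E\bigg[\bigg(\frac{\sum_{j=1}^N\exp(\xi_1\langle x_j,x_{N+1}\rangle)y_j}{\sum_{i=1}^N\exp(\xi_1\langle x_i,x_{N+1}\rangle)+\exp(\xi_1-\xi_2)}-y_{i^*}\bigg)^2\bigg],$$ and $\mathcal L$ is not a convex function of $(\xi_1,\xi_2)$.
   Context: Setting: $d,N\ge1$; prompt $x_1,\dots,x_N\in\mathbb R^d$, labels $y_1,\dots,y_N\in\mathbb R$, query $x_{N+1}$. Embedding $h_j=(x_j^\top,y_j,0)^\top$ ($j\le N$), $h_{N+1}=(x_{N+1}^\top,0,1)^\top$. For $W\in\mathbb R^{(d+2)\times(d+2)}$, $\hat y_W(x_{N+1})=\sum_{j=1}^N y_j\exp(h_j^\top Wh_{N+1})/\sum_{j=1}^{N+1}\exp(h_j^\top Wh_{N+1})$. $i^*=\arg\min_{j\in[N]}\|x_{N+1}-x_j\|_2$. Training distribution: $x_1,\dots,x_{N+1}$ i.i.d. uniform on $\mathbb S^{d-1}$; $\mathbb E[y_iy_j\mid x_{1:N}]=0$ ($i\ne j$), $\mathbb E[y_i^2\mid x_{1:N}]=1$, $\mathbb P(y_{1:N}\mid x_{1:N})=\mathbb P(y_{1:N}\mid -x_{1:N})$.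 Loss $L(W)=\frac12\mathbb E[(\hat y_W(x_{N+1})-y_{i^*})^2]$. *)

theory Defs
  imports "HOL-Probability.Probability" "HOL-Library.Numeral_Type"
begin

text \<open>Uniform probability measure on the unit sphere of real^'d: the normalized
  cone measure, i.e. the image of the uniform distribution on the unit ball under
  radial projection x \<mapsto> x / |x|.\<close>
definition sphere_unif :: "(real^'d) measure" where
  "sphere_unif = distr (uniform_measure lborel (ball 0 1)) borel (\<lambda>x. x /\<^sub>R norm x)"

text \<open>Coordinates of R^(d+2): Inl k (k::'d) are the first d coordinates,
  Inr 0 is coordinate d+1, Inr 1 is coordinate d+2.\<close>
definition emb_x :: "real^'d \<Rightarrow> real \<Rightarrow> real^('d + 2)" where
  "emb_x x y = (\<chi> i. case i of Inl k \<Rightarrow> x $ k | Inr t \<Rightarrow> (if t = 0 then y else 0))"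

definition emb_q :: "real^'d \<Rightarrow> real^('d + 2)" where
  "emb_q x = (\<chi> i. case i of Inl k \<Rightarrow> x $ k | Inr t \<Rightarrow> (if t = 0 then 0 else 1))"

text \<open>Prompt indices 1..N, query index N+1.\<close>
definition tf_pred :: "real^('d + 2)^('d + 2) \<Rightarrow> nat \<Rightarrow> (nat \<Rightarrow> real^'d) \<Rightarrow> (nat \<Rightarrow> real) \<Rightarrow> real" where
  "tf_pred W N x y =
     (\<Sum>j=1..N. y j * exp (emb_x (x j) (y j) \<bullet> (W *v emb_q (x (N+1)))))
     / ((\<Sum>j=1..N. exp (emb_x (x j) (y j) \<bullet> (W *v emb_q (x (N+1)))))
        + exp (emb_q (x (N+1)) \<bullet> (W *v emb_q (x (N+1)))))"

definition nearest :: "nat \<Rightarrow> (nat \<Rightarrow> real^'d) \<Rightarrow> nat" where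
  "nearest N x = (ARG_MIN (\<lambda>j. dist (x (N+1)) (x j)) j. j \<in> {1..N})"

definition icl_loss :: "'a measure \<Rightarrow> nat \<Rightarrow> (nat \<Rightarrow> 'a \<Rightarrow> real^'d) \<Rightarrow> (nat \<Rightarrow> 'a \<Rightarrow> real)
    \<Rightarrow> real^('d + 2)^('d + 2) \<Rightarrow> real" where
  "icl_loss M N X Y W = 1/2 * (\<integral>\<omega>. (tf_pred W N (\<lambda>j. X j \<omega>) (\<lambda>j. Y j \<omega>)
        - Y (nearest N (\<lambda>j. X j \<omega>)) \<omega>)\<^sup>2 \<partial>M)"

definition diagW :: "real \<Rightarrow> real \<Rightarrow> real^('d::finite + 2)^('d + 2)" where
  "diagW \<xi>1 \<xi>2 = (\<chi> i j. if i = j then (case i of Inl _ \<Rightarrow> \<xi>1 | Inr t \<Rightarrow> (if t = 0 then 0 else - \<xi>2)) else 0)"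

definition Lcal :: "'a measure \<Rightarrow> nat \<Rightarrow> (nat \<Rightarrow> 'a \<Rightarrow> real^'d) \<Rightarrow> (nat \<Rightarrow> 'a \<Rightarrow> real)
    \<Rightarrow> real \<Rightarrow> real \<Rightarrow> real" where
  "Lcal M N X Y \<xi>1 \<xi>2 = (\<integral>\<omega>.
      ((\<Sum>j=1..N. exp (\<xi>1 * (X j \<omega> \<bullet> X (N+1) \<omega>)) * Y j \<omega>)
        / ((\<Sum>i=1..N. exp (\<xi>1 * (X i \<omega> \<bullet> X (N+1) \<omega>))) + exp (\<xi>1 - \<xi>2))
       - Y (nearest N (\<lambda>j. X j \<omega>)) \<omega>)\<^sup>2 \<partial>M)"

definition prompt_alg :: "'a measure \<Rightarrow> nat \<Rightarrow> (nat \<Rightarrow> 'a \<Rightarrow> real^'d) \<Rightarrow> 'a measure" where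
  "prompt_alg M N X = vimage_algebra (space M) (\<lambda>\<omega>. \<lambda>i\<in>{1..N}. X i \<omega>) (PiM {1..N} (\<lambda>_. borel))"

end

theory Submission
  imports Defs
begin


lemma sum_dplus2: "sum (f :: ('d::finite + 2) \<Rightarrow> real) UNIV = (\<Sum>k\<in>UNIV. f (Inl k)) + f (Inr 0) + f (Inr 1)"
proof -
  have "sum f UNIV = sum f (UNIV <+> UNIV)" by simp
  also have "\<dots> = (\<Sum>k\<in>UNIV. f (Inl k)) + (\<Sum>t\<in>(UNIV::2 set). f (Inr t))"
    by (subst sum.Plus) auto
  also have "(UNIV::2 set) = {0,1}" using UNIV_2 by auto
  finally show ?thesis by simp
qed

lemma diag_x: "emb_x x y \<bullet> (diagW \<xi>1 \<xi>2 *v emb_q z) = \<xi>1 * (x \<bullet> z)"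
proof -
  have mv: "(diagW \<xi>1 \<xi>2 *v emb_q z) $ i = (case i of Inl k \<Rightarrow> \<xi>1 * z $ k | Inr t \<Rightarrow> (if t = 0 then 0 else - \<xi>2))" for i
    unfolding matrix_vector_mult_def diagW_def emb_q_def
    by (simp add: if_distrib if_distribR sum.delta cong: if_cong split: sum.splits)
  show ?thesis
    unfolding inner_vec_def
    by (simp add: sum_dplus2 mv emb_x_def sum_distrib_left mult_ac)
qed

lemma diag_q: "emb_q z \<bullet> (diagW \<xi>1 \<xi>2 *v emb_q z) = \<xi>1 * (z \<bullet> z) - \<xi>2"
proof -
  have mv: "(diagW \<xi>1 \<xi>2 *v emb_q z) $ i = (case i of Inl k \<Rightarrow> \<xi>1 * z $ k | Inr t \<Rightarrow> (if t = 0 then 0 else - \<xi>2))" for i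
    unfolding matrix_vector_mult_def diagW_def emb_q_def
    by (simp add: if_distrib if_distribR sum.delta cong: if_cong split: sum.splits)
  show ?thesis
    unfolding inner_vec_def sum_dplus2 mv
    by (simp add: emb_q_def sum_distrib_left mult_ac)
qed

lemma sphere_unif_norm: "AE x in (sphere_unif :: (real^'d) measure). norm x = 1"
  unfolding sphere_unif_def
proof (subst AE_distr_iff)
  show "(\<lambda>x::real^'d. x /\<^sub>R norm x) \<in> measurable (uniform_measure lborel (ball 0 1)) borel"
    by (simp add: measurable_cong_sets[OF sets_uniform_measure refl])
  show "{x \<in> space borel. norm (x::real^'d) = 1} \<in> sets borel" by measurable
  show "AE x in uniform_measure lborel (ball (0::real^'d) 1). norm (x /\<^sub>R norm x) = 1"
    by (rule AE_uniform_measureI) (auto intro: eventually_mono[OF AE_lborel_singleton[of 0]])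
qed

lemma nearest_eq: "nearest N x = (SOME j. j \<in> {j\<in>{1..N}. \<forall>i\<in>{1..N}. dist (x(N+1)) (x j) \<le> dist (x(N+1)) (x i)})"
  unfolding nearest_def arg_min_def is_arg_min_def
  by (rule arg_cong[where f=Eps]) (auto simp: fun_eq_iff not_less)

lemma nearest_mem: "N \<ge> 1 \<Longrightarrow> nearest N x \<in> {1..N}"
proof -
  assume "N \<ge> 1"
  then have "arg_min_on (\<lambda>j. dist (x (N+1)) (x j)) {1..N} \<in> {1..N}" by (intro arg_min_if_finite) auto
  then show ?thesis by (simp only: nearest_def arg_min_on_def)
qed

lemma nearest_meas:
  assumes X: "\<And>i. i \<in> {1..N+1} \<Longrightarrow> X i \<in> borel_measurable M"
  shows "(\<lambda>\<omega>. nearest N (\<lambda>j. X j \<omega>)) \<in> measurable M (count_space UNIV)"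
proof -
  define T where "T \<omega> = {j\<in>{1..N}. \<forall>i\<in>{1..N}. dist (X (N+1) \<omega>) (X j \<omega>) \<le> dist (X (N+1) \<omega>) (X i \<omega>)}" for \<omega>
  have P: "{\<omega>\<in>space M. dist (X (N+1) \<omega>) (X j \<omega>) \<le> dist (X (N+1) \<omega>) (X i \<omega>)} \<in> sets M"
    if "i \<in> {1..N}" "j \<in> {1..N}" for i j
  proof -
    have [measurable]: "X i \<in> borel_measurable M" "X j \<in> borel_measurable M" "X (N+1) \<in> borel_measurable M"
      using that X by auto
    show ?thesis by measurable
  qed
  have "T \<in> measurable M (count_space (Pow {1..N}))"
  proof (subst measurable_count_space_eq2, simp, intro conjI ballI)
    show "T \<in> space M \<rightarrow> Pow {1..N}" unfolding T_def by auto
    fix U assume U: "U \<in> Pow {1..N}"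
    have TU: "T \<omega> = U \<longleftrightarrow> (\<forall>j\<in>{1..N}. (j \<in> U \<longleftrightarrow> (\<forall>i\<in>{1..N}. dist (X (N+1) \<omega>) (X j \<omega>) \<le> dist (X (N+1) \<omega>) (X i \<omega>))))" for \<omega>
    proof
      assume "T \<omega> = U" then show "\<forall>j\<in>{1..N}. (j \<in> U \<longleftrightarrow> (\<forall>i\<in>{1..N}. dist (X (N+1) \<omega>) (X j \<omega>) \<le> dist (X (N+1) \<omega>) (X i \<omega>)))"
        unfolding T_def by auto
    next
      assume H: "\<forall>j\<in>{1..N}. (j \<in> U \<longleftrightarrow> (\<forall>i\<in>{1..N}. dist (X (N+1) \<omega>) (X j \<omega>) \<le> dist (X (N+1) \<omega>) (X i \<omega>)))"
      show "T \<omega> = U"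
      proof (rule set_eqI)
        fix j show "j \<in> T \<omega> \<longleftrightarrow> j \<in> U"
        proof (cases "j \<in> {1..N}")
          case True then show ?thesis using H unfolding T_def by auto
        next
          case False then show ?thesis using U unfolding T_def by auto
        qed
      qed
    qed
    have "T -` {U} \<inter> space M = {\<omega>\<in>space M. \<forall>j\<in>{1..N}. (j \<in> U \<longleftrightarrow> (\<forall>i\<in>{1..N}. dist (X (N+1) \<omega>) (X j \<omega>) \<le> dist (X (N+1) \<omega>) (X i \<omega>)))}"
      using TU by auto
    also have "\<dots> \<in> sets M"
      using P by (intro sets.sets_Collect_finite_All sets.sets_Collect_conj sets.sets_Collect_imp sets.sets_Collect_const) auto
    finally show "T -` {U} \<inter> space M \<in> sets M" .
  qed
  then have "(\<lambda>\<omega>. (\<lambda>U. SOME j. j \<in> U) (T \<omega>)) \<in> measurable M (count_space UNIV)"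
    by (rule measurable_compose) simp
  then show ?thesis unfolding nearest_eq T_def by simp
qed

lemma Ystar_meas:
  assumes X: "\<And>i. i \<in> {1..N+1} \<Longrightarrow> X i \<in> borel_measurable M"
    and Y: "\<And>i. i \<in> {1..N} \<Longrightarrow> (Y i :: _ \<Rightarrow> real) \<in> borel_measurable M" and N: "N \<ge> 1"
  shows "(\<lambda>\<omega>. Y (nearest N (\<lambda>j. X j \<omega>)) \<omega>) \<in> borel_measurable M"
proof -
  have "(\<lambda>\<omega>. (\<lambda>i \<omega>. if i \<in> {1..N} then Y i \<omega> else 0) (nearest N (\<lambda>j. X j \<omega>)) \<omega>) \<in> borel_measurable M"
    by (rule measurable_compose_countable[OF _ nearest_meas[OF X]]) (use Y in \<open>case_tac "i \<in> {1..N}", simp_all del: atLeastAtMost_iff\<close>)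
  moreover have "(\<lambda>\<omega>. (\<lambda>i \<omega>. if i \<in> {1..N} then Y i \<omega> else 0) (nearest N (\<lambda>j. X j \<omega>)) \<omega>) = (\<lambda>\<omega>. Y (nearest N (\<lambda>j. X j \<omega>)) \<omega>)"
  proof (intro ext)
    fix \<omega> have "nearest N (\<lambda>j. X j \<omega>) \<in> {1..N}" by (rule nearest_mem[OF N])
    then show "(\<lambda>i \<omega>. if i \<in> {1..N} then Y i \<omega> else 0) (nearest N (\<lambda>j. X j \<omega>)) \<omega> = Y (nearest N (\<lambda>j. X j \<omega>)) \<omega>"
      by (simp only: if_True)
  qed
  ultimately show ?thesis by simp
qed

lemma part1:
  fixes X :: "nat \<Rightarrow> 'a \<Rightarrow> real^'d" and Y :: "nat \<Rightarrow> 'a \<Rightarrow> real"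
  assumes X: "\<And>i. i \<in> {1..N+1} \<Longrightarrow> X i \<in> borel_measurable M"
    and Y: "\<And>i. i \<in> {1..N} \<Longrightarrow> Y i \<in> borel_measurable M" and N: "N \<ge> 1"
    and nrm: "AE \<omega> in M. norm (X (N+1) \<omega>) = 1"
  shows "icl_loss M N X Y (diagW \<xi>1 \<xi>2) = 1/2 * Lcal M N X Y \<xi>1 \<xi>2"
proof -
  define G where "G \<omega> r = ((\<Sum>j=1..N. exp (\<xi>1 * (X j \<omega> \<bullet> X (N+1) \<omega>)) * Y j \<omega>)
        / ((\<Sum>i=1..N. exp (\<xi>1 * (X i \<omega> \<bullet> X (N+1) \<omega>))) + exp (\<xi>1 * r - \<xi>2))
       - Y (nearest N (\<lambda>j. X j \<omega>)) \<omega>)\<^sup>2" for \<omega> r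
  have XN[measurable]: "X (N+1) \<in> borel_measurable M" using X by auto
  have Ys[measurable]: "(\<lambda>\<omega>. Y (nearest N (\<lambda>j. X j \<omega>)) \<omega>) \<in> borel_measurable M"
    by (rule Ystar_meas[OF X Y N])
  have S1[measurable]: "(\<lambda>\<omega>. \<Sum>j=1..N. exp (\<xi>1 * (X j \<omega> \<bullet> X (N+1) \<omega>)) * Y j \<omega>) \<in> borel_measurable M"
  proof (intro borel_measurable_sum)
    fix j assume j: "j \<in> {1..N}"
    then have [measurable]: "X j \<in> borel_measurable M" "Y j \<in> borel_measurable M" using X Y by auto
    show "(\<lambda>\<omega>. exp (\<xi>1 * (X j \<omega> \<bullet> X (N+1) \<omega>)) * Y j \<omega>) \<in> borel_measurable M" by measurable
  qed
  have S2[measurable]: "(\<lambda>\<omega>. \<Sum>j=1..N. exp (\<xi>1 * (X j \<omega> \<bullet> X (N+1) \<omega>))) \<in> borel_measurable M"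
  proof (intro borel_measurable_sum)
    fix j assume j: "j \<in> {1..N}"
    then have [measurable]: "X j \<in> borel_measurable M" using X by auto
    show "(\<lambda>\<omega>. exp (\<xi>1 * (X j \<omega> \<bullet> X (N+1) \<omega>))) \<in> borel_measurable M" by measurable
  qed
  have Gm: "(\<lambda>\<omega>. G \<omega> (R \<omega>)) \<in> borel_measurable M" if [measurable]: "R \<in> borel_measurable M" for R
    unfolding G_def by measurable
  have eq1: "(tf_pred (diagW \<xi>1 \<xi>2) N (\<lambda>j. X j \<omega>) (\<lambda>j. Y j \<omega>) - Y (nearest N (\<lambda>j. X j \<omega>)) \<omega>)\<^sup>2
      = G \<omega> (X (N+1) \<omega> \<bullet> X (N+1) \<omega>)" for \<omega>
    unfolding tf_pred_def G_def diag_x diag_q by (simp add: mult.commute)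
  have eq2: "((\<Sum>j=1..N. exp (\<xi>1 * (X j \<omega> \<bullet> X (N+1) \<omega>)) * Y j \<omega>)
        / ((\<Sum>i=1..N. exp (\<xi>1 * (X i \<omega> \<bullet> X (N+1) \<omega>))) + exp (\<xi>1 - \<xi>2))
       - Y (nearest N (\<lambda>j. X j \<omega>)) \<omega>)\<^sup>2 = G \<omega> 1" for \<omega>
    unfolding G_def by simp
  have "(\<integral>\<omega>. (tf_pred (diagW \<xi>1 \<xi>2) N (\<lambda>j. X j \<omega>) (\<lambda>j. Y j \<omega>) - Y (nearest N (\<lambda>j. X j \<omega>)) \<omega>)\<^sup>2 \<partial>M)
      = (\<integral>\<omega>. G \<omega> 1 \<partial>M)"
    unfolding eq1
  proof (rule integral_cong_AE)
    show "(\<lambda>\<omega>. G \<omega> (X (N+1) \<omega> \<bullet> X (N+1) \<omega>)) \<in> borel_measurable M" by (rule Gm) measurable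
    show "(\<lambda>\<omega>. G \<omega> 1) \<in> borel_measurable M" by (rule Gm[of "\<lambda>_. 1", simplified]) 
    show "AE \<omega> in M. G \<omega> (X (N+1) \<omega> \<bullet> X (N+1) \<omega>) = G \<omega> 1"
      using nrm by eventually_elim (simp add: inner_commute dot_square_norm)
  qed
  then show ?thesis unfolding icl_loss_def Lcal_def eq2 by simp
qed

lemma nonconvex_aux:
  fixes g :: "real \<times> real \<Rightarrow> real" and N :: nat
  assumes N: "N \<ge> 1"
    and G: "\<And>t. g (0, t) = real N * (1 / (real N + exp (- t)))\<^sup>2 - 2 * B * (1 / (real N + exp (- t))) + C"
  shows "\<not> convex_on UNIV g"
proof
  assume cvx: "convex_on UNIV g"
  have mid: "g (0, (x + y) / 2) \<le> (g (0, x) + g (0, y)) / 2" for x y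
  proof -
    have "g ((1 - 1/2) *\<^sub>R (0, x) + (1/2) *\<^sub>R (0, y)) \<le> (1 - 1/2) * g (0, x) + (1/2) * g (0, y)"
      by (rule convex_onD[OF cvx]) auto
    moreover have "(1 - 1/2) *\<^sub>R (0::real, x) + (1/2) *\<^sub>R (0, y) = (0, (x + y) / 2)" by simp
    ultimately show ?thesis by (simp add: add_divide_distrib)
  qed
  define p where "p = 1 / real N"
  define q where "q = B / real N"
  have Npos: "real N > 0" using N by simp
  have p: "p > 0" using Npos unfolding p_def by simp
  have gm: "g (0, - (ln (real N) + ln m)) = p * (1 / (1 + m))\<^sup>2 - 2 * q * (1 / (1 + m)) + C" if m: "m > 0" for m
  proof -
    have "exp (- (- (ln (real N) + ln m))) = real N * m" using Npos m by (simp add: exp_add)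
    then have "g (0, - (ln (real N) + ln m)) = real N * (1 / (real N + real N * m))\<^sup>2 - 2 * B * (1 / (real N + real N * m)) + C"
      by (simp add: G)
    also have "\<dots> = p * (1 / (1 + m))\<^sup>2 - 2 * q * (1 / (1 + m)) + C"
    proof -
      have e: "real N + real N * m = real N * (1 + m)" by (simp add: algebra_simps)
      have a: "1 / (real N * (1 + m)) = p * (1 / (1 + m))" unfolding p_def by simp
      have Np: "real N * p = 1" unfolding p_def using Npos by simp
      have qq: "q = B * p" unfolding q_def p_def by simp
      have "real N * (p * (1 / (1 + m)))\<^sup>2 = (real N * p) * p * (1 / (1 + m))\<^sup>2"
        by (simp add: power2_eq_square algebra_simps)
      then show ?thesis unfolding e a qq Np by (simp add: algebra_simps)
    qed
    finally show ?thesis .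
  qed
  have l1: "ln (100::real) = 2 * ln 10" using ln_mult[of 10 10] by simp
  have l2: "ln (1/100::real) = 2 * ln (1/10)" using ln_mult[of "1/10" "1/10"] by simp
  have m1: "g (0, - (ln (real N) + ln 10)) \<le> (g (0, - (ln (real N) + ln 100)) + g (0, - (ln (real N) + ln 1))) / 2"
  proof -
    have e1: "(- (ln (real N) + ln 100) + - (ln (real N) + ln 1)) / 2 = - (ln (real N) + ln 10)" using l1 by simp
    show ?thesis using mid[of "- (ln (real N) + ln 100)" "- (ln (real N) + ln 1)"] unfolding e1 .
  qed
  have m2: "g (0, - (ln (real N) + ln (1/10))) \<le> (g (0, - (ln (real N) + ln 1)) + g (0, - (ln (real N) + ln (1/100)))) / 2"
  proof -
    have e2: "(- (ln (real N) + ln 1) + - (ln (real N) + ln (1/100))) / 2 = - (ln (real N) + ln (1/10))" using l2 by simp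
    show ?thesis using mid[of "- (ln (real N) + ln 1)" "- (ln (real N) + ln (1/100))"] unfolding e2 .
  qed
  have v1: "g (0, - (ln (real N) + ln 100)) = p * (1 / (1 + 100))\<^sup>2 - 2 * q * (1 / (1 + 100)) + C" by (rule gm) simp
  have v2: "g (0, - (ln (real N) + ln 10)) = p * (1 / (1 + 10))\<^sup>2 - 2 * q * (1 / (1 + 10)) + C" by (rule gm) simp
  have v3: "g (0, - (ln (real N) + ln 1)) = p * (1 / (1 + 1))\<^sup>2 - 2 * q * (1 / (1 + 1)) + C" by (rule gm) simp
  have v4: "g (0, - (ln (real N) + ln (1/10))) = p * (1 / (1 + 1/10))\<^sup>2 - 2 * q * (1 / (1 + 1/10)) + C" by (rule gm) simp
  have v5: "g (0, - (ln (real N) + ln (1/100))) = p * (1 / (1 + 1/100))\<^sup>2 - 2 * q * (1 / (1 + 1/100)) + C" by (rule gm) simp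
  have w1: "p * (1 / (1 + 10))\<^sup>2 - 2 * q * (1 / (1 + 10)) + C \<le> ((p * (1 / (1 + 100))\<^sup>2 - 2 * q * (1 / (1 + 100)) + C) + (p * (1 / (1 + 1))\<^sup>2 - 2 * q * (1 / (1 + 1)) + C)) / 2"
    using m1 unfolding v1 v2 v3 .
  have w2: "p * (1 / (1 + 1/10))\<^sup>2 - 2 * q * (1 / (1 + 1/10)) + C \<le> ((p * (1 / (1 + 1))\<^sup>2 - 2 * q * (1 / (1 + 1)) + C) + (p * (1 / (1 + 1/100))\<^sup>2 - 2 * q * (1 / (1 + 1/100)) + C)) / 2"
    using m2 unfolding v3 v4 v5 .
  from w1 w2 p show False by (simp add: power2_eq_square)
qed

lemma abs_mult_le_sq: "\<bar>(a::real) * b\<bar> \<le> a\<^sup>2 + b\<^sup>2"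
proof -
  have "0 \<le> (\<bar>a\<bar> - \<bar>b\<bar>)\<^sup>2" by simp
  then have "2 * (\<bar>a\<bar> * \<bar>b\<bar>) \<le> a\<^sup>2 + b\<^sup>2" by (simp add: power2_diff)
  moreover have "0 \<le> \<bar>a\<bar> * \<bar>b\<bar>" by simp
  ultimately show ?thesis unfolding abs_mult by linarith
qed

lemma L2prod:
  fixes f g :: "'a \<Rightarrow> real"
  assumes [measurable]: "f \<in> borel_measurable M" "g \<in> borel_measurable M"
    and "integrable M (\<lambda>x. (f x)\<^sup>2)" "integrable M (\<lambda>x. (g x)\<^sup>2)"
  shows "integrable M (\<lambda>x. f x * g x)"
proof (rule Bochner_Integration.integrable_bound[where f="\<lambda>x. (f x)\<^sup>2 + (g x)\<^sup>2"])
  show "integrable M (\<lambda>x. (f x)\<^sup>2 + (g x)\<^sup>2)" using assms by simp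
  show "(\<lambda>x. f x * g x) \<in> borel_measurable M" by measurable
  show "AE x in M. norm (f x * g x) \<le> norm ((f x)\<^sup>2 + (g x)\<^sup>2)"
    using abs_mult_le_sq by (simp add: abs_of_nonneg)
qed

lemma Lcal_zero:
  fixes X :: "nat \<Rightarrow> 'a \<Rightarrow> real^'d" and Y :: "nat \<Rightarrow> 'a \<Rightarrow> real"
  assumes P: "prob_space M" and N: "N \<ge> 1"
    and X: "\<And>i. i \<in> {1..N+1} \<Longrightarrow> X i \<in> borel_measurable M"
    and Y: "\<And>i. i \<in> {1..N} \<Longrightarrow> Y i \<in> borel_measurable M"
    and Y2: "\<And>i. i \<in> {1..N} \<Longrightarrow> integrable M (\<lambda>\<omega>. (Y i \<omega>)\<^sup>2)"
    and C0: "\<And>i j. i \<in> {1..N} \<Longrightarrow> j \<in> {1..N} \<Longrightarrow> i \<noteq> j \<Longrightarrow>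
           AE \<omega> in M. real_cond_exp M (prompt_alg M N X) (\<lambda>\<omega>. Y i \<omega> * Y j \<omega>) \<omega> = 0"
    and C1: "\<And>i. i \<in> {1..N} \<Longrightarrow>
           AE \<omega> in M. real_cond_exp M (prompt_alg M N X) (\<lambda>\<omega>. (Y i \<omega>)\<^sup>2) \<omega> = 1"
  shows "\<exists>B C. \<forall>t. Lcal M N X Y 0 t = real N * (1 / (real N + exp (- t)))\<^sup>2 - 2 * B * (1 / (real N + exp (- t))) + C"
proof -
  interpret prob_space M by (rule P)
  define F where "F = prompt_alg M N X"
  have sub: "subalgebra M F"
    unfolding subalgebra_def
  proof
    show "space F = space M" unfolding F_def prompt_alg_def by simp
    have fm: "(\<lambda>\<omega>. \<lambda>i\<in>{1..N}. X i \<omega>) \<in> measurable M (PiM {1..N} (\<lambda>_. borel))"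
      using X by (intro measurable_restrict) auto
    show "sets F \<subseteq> sets M"
      unfolding F_def prompt_alg_def
      by (subst sets_vimage_algebra2) (use measurable_space[OF fm] measurable_sets[OF fm] in auto)
  qed
  interpret sigma_finite_subalgebra M F
    by (rule finite_measure_subalgebra_is_sigma_finite) (unfold_locales, rule sub)
  have Iij: "(\<integral>\<omega>. Y i \<omega> * Y j \<omega> \<partial>M) = (if i = j then 1 else 0)" if ij: "i \<in> {1..N}" "j \<in> {1..N}" for i j
  proof -
    have [measurable]: "Y i \<in> borel_measurable M" "Y j \<in> borel_measurable M" using Y ij by auto
    have int: "integrable M (\<lambda>\<omega>. Y i \<omega> * Y j \<omega>)" by (rule L2prod) (use Y2 ij in auto)
    have "(\<integral>\<omega>. Y i \<omega> * Y j \<omega> \<partial>M) = (\<integral>\<omega>. real_cond_exp M F (\<lambda>\<omega>. Y i \<omega> * Y j \<omega>) \<omega> \<partial>M)"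
      using real_cond_exp_int(2)[OF int] by simp
    also have "\<dots> = (\<integral>\<omega>. (if i = j then 1 else 0) \<partial>M)"
    proof (rule integral_cong_AE)
      show "real_cond_exp M F (\<lambda>\<omega>. Y i \<omega> * Y j \<omega>) \<in> borel_measurable M" by measurable
      show "(\<lambda>\<omega>. if i = j then 1 else 0::real) \<in> borel_measurable M" by simp
      show "AE \<omega> in M. real_cond_exp M F (\<lambda>\<omega>. Y i \<omega> * Y j \<omega>) \<omega> = (if i = j then 1 else 0)"
      proof (cases "i = j")
        case True
        then show ?thesis using C1[OF ij(1)] unfolding F_def by (simp add: power2_eq_square)
      next
        case False
        then show ?thesis using C0[OF ij False] unfolding F_def by simp
      qed
    qed
    also have "\<dots> = (if i = j then 1 else 0)" by (simp add: prob_space)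
    finally show ?thesis .
  qed
  define S where "S \<omega> = (\<Sum>j=1..N. Y j \<omega>)" for \<omega>
  define Ys where "Ys \<omega> = Y (nearest N (\<lambda>j. X j \<omega>)) \<omega>" for \<omega>
  have Ysm[measurable]: "Ys \<in> borel_measurable M" unfolding Ys_def by (rule Ystar_meas[OF X Y N])
  have Sm[measurable]: "S \<in> borel_measurable M" unfolding S_def by (rule borel_measurable_sum) (use Y in auto)
  have SS: "(S \<omega>)\<^sup>2 = (\<Sum>i=1..N. \<Sum>j=1..N. Y i \<omega> * Y j \<omega>)" for \<omega>
    unfolding S_def power2_eq_square by (rule sum_product)
  have SYs: "S \<omega> * Ys \<omega> = (\<Sum>i=1..N. Y i \<omega> * Ys \<omega>)" for \<omega>
    unfolding S_def by (rule sum_distrib_right)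
  have intSS: "integrable M (\<lambda>\<omega>. (S \<omega>)\<^sup>2)"
    unfolding SS by (intro Bochner_Integration.integrable_sum L2prod) (use Y Y2 in auto)
  have intQ: "integrable M (\<lambda>\<omega>. \<Sum>k=1..N. (Y k \<omega>)\<^sup>2)" using Y2 by auto
  have intYs: "integrable M (\<lambda>\<omega>. (Ys \<omega>)\<^sup>2)"
  proof (rule Bochner_Integration.integrable_bound[OF intQ])
    show "(\<lambda>\<omega>. (Ys \<omega>)\<^sup>2) \<in> borel_measurable M" by measurable
    show "AE \<omega> in M. norm ((Ys \<omega>)\<^sup>2) \<le> norm (\<Sum>k=1..N. (Y k \<omega>)\<^sup>2)"
    proof (rule AE_I2)
      fix \<omega>
      have k: "nearest N (\<lambda>j. X j \<omega>) \<in> {1..N}" by (rule nearest_mem[OF N])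
      have "(Ys \<omega>)\<^sup>2 \<le> (\<Sum>k=1..N. (Y k \<omega>)\<^sup>2)"
        unfolding Ys_def by (rule member_le_sum[OF k]) auto
      moreover have "0 \<le> (\<Sum>k=1..N. (Y k \<omega>)\<^sup>2)" by (intro sum_nonneg) auto
      ultimately show "norm ((Ys \<omega>)\<^sup>2) \<le> norm (\<Sum>k=1..N. (Y k \<omega>)\<^sup>2)" by simp
    qed
  qed
  have intSYs: "integrable M (\<lambda>\<omega>. S \<omega> * Ys \<omega>)"
    unfolding SYs by (intro Bochner_Integration.integrable_sum L2prod) (use Y Y2 intYs in auto)
  have A: "(\<integral>\<omega>. (S \<omega>)\<^sup>2 \<partial>M) = real N"
  proof -
    have "(\<integral>\<omega>. (S \<omega>)\<^sup>2 \<partial>M) = (\<integral>\<omega>. (\<Sum>i=1..N. \<Sum>j=1..N. Y i \<omega> * Y j \<omega>) \<partial>M)"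
      unfolding SS ..
    also have "\<dots> = (\<Sum>i=1..N. (\<integral>\<omega>. (\<Sum>j=1..N. Y i \<omega> * Y j \<omega>) \<partial>M))"
      by (rule Bochner_Integration.integral_sum, intro Bochner_Integration.integrable_sum L2prod) (use Y Y2 in auto)
    also have "\<dots> = (\<Sum>i=1..N. \<Sum>j=1..N. (\<integral>\<omega>. Y i \<omega> * Y j \<omega> \<partial>M))"
      by (intro sum.cong refl Bochner_Integration.integral_sum L2prod) (use Y Y2 in auto)
    also have "\<dots> = (\<Sum>i=1..N. \<Sum>j=1..N. (if i = j then 1 else 0))"
      by (intro sum.cong refl Iij) auto
    also have "\<dots> = real N" by simp
    finally show ?thesis .
  qed
  define B where "B = (\<integral>\<omega>. S \<omega> * Ys \<omega> \<partial>M)"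
  define C where "C = (\<integral>\<omega>. (Ys \<omega>)\<^sup>2 \<partial>M)"
  have "Lcal M N X Y 0 t = real N * (1 / (real N + exp (- t)))\<^sup>2 - 2 * B * (1 / (real N + exp (- t))) + C" for t
  proof -
    define a where "a = 1 / (real N + exp (- t))"
    have pw: "((\<Sum>j=1..N. exp (0 * (X j \<omega> \<bullet> X (N+1) \<omega>)) * Y j \<omega>)
        / ((\<Sum>i=1..N. exp (0 * (X i \<omega> \<bullet> X (N+1) \<omega>))) + exp (0 - t))
       - Y (nearest N (\<lambda>j. X j \<omega>)) \<omega>)\<^sup>2 = a\<^sup>2 * (S \<omega>)\<^sup>2 - (2 * a) * (S \<omega> * Ys \<omega>) + (Ys \<omega>)\<^sup>2" for \<omega>
      unfolding a_def S_def Ys_def by (simp add: power2_eq_square algebra_simps add_divide_distrib)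
    have "Lcal M N X Y 0 t = (\<integral>\<omega>. a\<^sup>2 * (S \<omega>)\<^sup>2 - (2 * a) * (S \<omega> * Ys \<omega>) + (Ys \<omega>)\<^sup>2 \<partial>M)"
      unfolding Lcal_def pw ..
    also have "\<dots> = a\<^sup>2 * real N - (2 * a) * B + C"
      using intSS intSYs intYs A unfolding B_def C_def by simp
    finally show ?thesis unfolding a_def by simp
  qed
  then show ?thesis by blast
qed


theorem lemma3:
  fixes M :: "'a measure" and N :: nat
    and X :: "nat \<Rightarrow> 'a \<Rightarrow> real^'d" and Y :: "nat \<Rightarrow> 'a \<Rightarrow> real"
  assumes "prob_space M" and "N \<ge> 1"
    and "\<And>i. i \<in> {1..N+1} \<Longrightarrow> X i \<in> borel_measurable M"
    and "prob_space.indep_vars M (\<lambda>_. borel) X {1..N+1}"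
    and "\<And>i. i \<in> {1..N+1} \<Longrightarrow> distr M borel (X i) = sphere_unif"
    and "\<And>i. i \<in> {1..N} \<Longrightarrow> Y i \<in> borel_measurable M"
    and "\<And>i. i \<in> {1..N} \<Longrightarrow> integrable M (\<lambda>\<omega>. (Y i \<omega>)\<^sup>2)"
    and "\<And>i j. i \<in> {1..N} \<Longrightarrow> j \<in> {1..N} \<Longrightarrow> i \<noteq> j \<Longrightarrow>
           AE \<omega> in M. real_cond_exp M (prompt_alg M N X) (\<lambda>\<omega>. Y i \<omega> * Y j \<omega>) \<omega> = 0"
    and "\<And>i. i \<in> {1..N} \<Longrightarrow>
           AE \<omega> in M. real_cond_exp M (prompt_alg M N X) (\<lambda>\<omega>. (Y i \<omega>)\<^sup>2) \<omega> = 1"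
    and "distr M ((PiM {1..N} (\<lambda>_. borel)) \<Otimes>\<^sub>M (PiM {1..N} (\<lambda>_. borel)))
           (\<lambda>\<omega>. (\<lambda>i\<in>{1..N}. X i \<omega>, \<lambda>i\<in>{1..N}. Y i \<omega>))
         = distr M ((PiM {1..N} (\<lambda>_. borel)) \<Otimes>\<^sub>M (PiM {1..N} (\<lambda>_. borel)))
           (\<lambda>\<omega>. (\<lambda>i\<in>{1..N}. - X i \<omega>, \<lambda>i\<in>{1..N}. Y i \<omega>))"
    and "distr M (((PiM {1..N} (\<lambda>_. borel)) \<Otimes>\<^sub>M (PiM {1..N} (\<lambda>_. borel))) \<Otimes>\<^sub>M borel)
           (\<lambda>\<omega>. ((\<lambda>i\<in>{1..N}. X i \<omega>, \<lambda>i\<in>{1..N}. Y i \<omega>), X (N+1) \<omega>))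
         = distr M ((PiM {1..N} (\<lambda>_. borel)) \<Otimes>\<^sub>M (PiM {1..N} (\<lambda>_. borel))) (\<lambda>\<omega>. (\<lambda>i\<in>{1..N}. X i \<omega>, \<lambda>i\<in>{1..N}. Y i \<omega>)) \<Otimes>\<^sub>M distr M borel (X (N+1))"
  shows "(\<forall>\<xi>1 \<xi>2. icl_loss M N X Y (diagW \<xi>1 \<xi>2) = 1/2 * Lcal M N X Y \<xi>1 \<xi>2)
         \<and> \<not> convex_on UNIV (\<lambda>p::real \<times> real. Lcal M N X Y (fst p) (snd p))"
  proof -
  interpret prob_space M by (rule assms(1))
  have X: "\<And>i. i \<in> {1..N+1} \<Longrightarrow> X i \<in> borel_measurable M" by (rule assms(3))
  have XN[measurable]: "X (N+1) \<in> borel_measurable M" using X by auto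
  have "AE x in distr M borel (X (N+1)). norm x = 1"
  proof -
    have e: "distr M borel (X (N+1)) = sphere_unif" by (rule assms(5)) simp
    show ?thesis unfolding e by (rule sphere_unif_norm)
  qed
  then have nrm: "AE \<omega> in M. norm (X (N+1) \<omega>) = 1"
    by (subst (asm) AE_distr_iff) (use XN in auto)
  have p1: "\<forall>\<xi>1 \<xi>2. icl_loss M N X Y (diagW \<xi>1 \<xi>2) = 1/2 * Lcal M N X Y \<xi>1 \<xi>2"
    using part1[where M=M and N=N and X=X and Y=Y, OF X assms(6) assms(2) nrm] by blast
  obtain B C where BC: "\<And>t. Lcal M N X Y 0 t = real N * (1 / (real N + exp (- t)))\<^sup>2 - 2 * B * (1 / (real N + exp (- t))) + C"
    using Lcal_zero[where M=M and N=N and X=X and Y=Y, OF assms(1,2) X assms(6,7,8,9)] by blast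
  have p2: "\<not> convex_on UNIV (\<lambda>p::real \<times> real. Lcal M N X Y (fst p) (snd p))"
    by (rule nonconvex_aux[OF assms(2)]) (simp add: BC)
  from p1 p2 show ?thesis by blast
qed

end
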